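(* Let $d\in\mathbb{N}$, $d\geq 2$, and for $\theta\in \mathbb{R}$ let $R_{\theta}\colon \mathbb{R}^{d}\to\mathbb{R}^{d}$ be the linear map $R_\theta(x_1,\dots,x_d)=(x_1\cos\theta-x_2\sin\theta,\ x_1\sin\theta+x_2\cos\theta,\ x_3,\dots,x_d)$. (i) For all $\theta_{1},\theta_{2}\in\mathbb{R}$ and $y\in\mathbb{R}^{d}$, $\|R_{\theta_{2}}(y)-R_{\theta_{1}}(y)\|\leq |\theta_{2}-\theta_{1}|\,\|y\|$. (ii) Let $t_{0}>0$ and let $\psi\colon [0,\infty)\to \mathbb{R}$ be a Lipschitz mapping with $\psi(t)=0$ for all $t\geq t_{0}$. Define $\Phi\colon\mathbb{R}^{d}\to\mathbb{R}^{d}$ by $\Phi(x)=R_{\psi(\|x\|)}(x)$. Then $\Phi$ is $(\operatorname{Lip}(\psi)t_{0}+1)$-bilipschitz and $\Phi(x)=x$ for all $x\in \mathbb{R}^{d}\setminus B(0,t_{0})$.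
   Context: $\|\cdot\|$ is the Euclidean norm, $B(0,t_0)$ the open Euclidean ball. $\operatorname{Lip}(\psi)$ is the smallest Lipschitz constant of $\psi$. A mapping is $L$-bilipschitz if it is injective and both it and its inverse are $L$-Lipschitz. *)

theory Defs
  imports "HOL-Analysis.Analysis"
begin

text \<open>R^d is modelled as real^'n with a finite linearly ordered index type 'n;
  the coordinates x_1, x_2 are the components at the two smallest indices.\<close>

definition idx1 :: "'n::{finite,linorder}" where
  "idx1 = Min (UNIV :: 'n set)"

definition idx2 :: "'n::{finite,linorder}" where
  "idx2 = Min (UNIV - {idx1 :: 'n})"

definition rot :: "real \<Rightarrow> (real,'n::{finite,linorder}) vec \<Rightarrow> (real,'n) vec" where
  "rot \<theta> x = (\<chi> i. if i = idx1 then x $ idx1 * cos \<theta> - x $ idx2 * sin \<theta>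
                   else if i = idx2 then x $ idx1 * sin \<theta> + x $ idx2 * cos \<theta>
                   else x $ i)"

definition Lip :: "'a::metric_space set \<Rightarrow> ('a \<Rightarrow> 'b::metric_space) \<Rightarrow> real" where
  "Lip S f = Inf {C. C-lipschitz_on S f}"

definition bilipschitz :: "real \<Rightarrow> ('a::metric_space \<Rightarrow> 'b::metric_space) \<Rightarrow> bool" where
  "bilipschitz L f \<longleftrightarrow> inj f \<and> L-lipschitz_on UNIV f \<and> L-lipschitz_on (range f) (inv f)"

end

theory Submission
  imports Defs
begin

lemma idx_ne: assumes "CARD('n::{finite,linorder}) \<ge> 2" shows "(idx1::'n) \<noteq> idx2"
proof -
  have "UNIV - {idx1::'n} \<noteq> {}"
  proof
    assume "UNIV - {idx1::'n} = {}"
    hence "(UNIV::'n set) = {idx1}" by auto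
    hence "CARD('n) = card {idx1::'n}" by (rule arg_cong)
    thus False using assms by simp
  qed
  hence "(idx2::'n) \<in> UNIV - {idx1}" unfolding idx2_def by (intro Min_in) auto
  thus ?thesis by auto
qed

lemma nsq: "norm (x::(real,'n::finite) vec)^2 = (\<Sum>i\<in>UNIV. (x$i)^2)"
  unfolding norm_vec_def L2_set_def by (simp add: sum_nonneg)

lemma sum_split: assumes "(a::'n::finite) \<noteq> b"
  shows "(\<Sum>i\<in>UNIV. f i) = f a + f b + (\<Sum>i\<in>UNIV-{a,b}. (f i::real))"
proof -
  have "(\<Sum>i\<in>UNIV. f i) = f a + (\<Sum>i\<in>UNIV-{a}. f i)" by (simp add: sum.remove)
  also have "(\<Sum>i\<in>UNIV-{a}. f i) = f b + (\<Sum>i\<in>UNIV-{a}-{b}. f i)"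
    using assms by (intro sum.remove) auto
  finally show ?thesis by (simp add: Diff_insert2[symmetric] insert_commute)
qed

lemma rot_comp: fixes x :: "(real,'n::{finite,linorder}) vec"
  assumes "(idx1::'n) \<noteq> idx2"
  shows "rot \<theta> x $ idx1 = x $ idx1 * cos \<theta> - x $ idx2 * sin \<theta>"
    "rot \<theta> x $ idx2 = x $ idx1 * sin \<theta> + x $ idx2 * cos \<theta>"
    "i \<noteq> idx1 \<Longrightarrow> i \<noteq> idx2 \<Longrightarrow> rot \<theta> x $ i = x $ i"
  using assms by (auto simp: rot_def)

lemma rot_norm: fixes x :: "(real,'n::{finite,linorder}) vec"
  assumes ne: "(idx1::'n) \<noteq> idx2"
  shows "norm (rot \<theta> x) = norm x"
proof -
  have id: "\<And>p q c s::real. (p * c - q * s)^2 + (p * s + q * c)^2 = (p^2+q^2)*(s^2+c^2)" by algebra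
  have d3: "(\<Sum>i\<in>UNIV-{idx1,idx2}. (rot \<theta> x $ i)^2) = (\<Sum>i\<in>UNIV-{idx1,idx2}. (x $ i)^2)"
    by (intro sum.cong) (auto simp: rot_comp(3)[OF ne])
  have "norm (rot \<theta> x)^2 = norm x^2"
    unfolding nsq sum_split[OF ne, of "\<lambda>i. (rot \<theta> x $ i)^2"] sum_split[OF ne, of "\<lambda>i. (x $ i)^2"]
      d3 rot_comp(1,2)[OF ne] id by simp
  thus ?thesis by (simp add: power2_eq_iff_nonneg)
qed

lemma rot_lin: fixes x :: "(real,'n::{finite,linorder}) vec"
  shows "rot \<theta> x - rot \<theta> y = rot \<theta> (x - y)"
  by (simp add: vec_eq_iff rot_def algebra_simps)

lemma rot0: "rot 0 x = x" by (simp add: vec_eq_iff rot_def)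

lemma rot_inv: fixes x :: "(real,'n::{finite,linorder}) vec"
  assumes ne: "(idx1::'n) \<noteq> idx2"
  shows "rot (-a) (rot a x) = x"
proof -
  have c: "cos a ^2 + sin a ^2 = 1" by simp
  have i1: "\<And>p q c s::real. (p * c - q * s) * c - (p * s + q * c) * (- s) = p * (c^2 + s^2)" by algebra
  have i2: "\<And>p q c s::real. (p * c - q * s) * (- s) + (p * s + q * c) * c = q * (c^2 + s^2)" by algebra
  have h1: "rot (-a) (rot a x) $ idx1 = x $ idx1"
    unfolding rot_comp(1,2)[OF ne] sin_minus cos_minus i1 c by simp
  have h2: "rot (-a) (rot a x) $ idx2 = x $ idx2"
    unfolding rot_comp(1,2)[OF ne] sin_minus cos_minus i2 c by simp
  have h3: "i \<noteq> idx1 \<Longrightarrow> i \<noteq> idx2 \<Longrightarrow> rot (-a) (rot a x) $ i = x $ i" for i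
    by (simp add: rot_comp(3)[OF ne])
  show ?thesis unfolding vec_eq_iff using h1 h2 h3 by metis
qed

lemma cosdiff: "(cos (b::real) - cos a)^2 + (sin b - sin a)^2 \<le> (b - a)^2"
proof -
  have A: "(cos b - cos a)^2 + (sin b - sin a)^2 = 2 - 2 * cos (b - a)"
    by (simp add: power2_eq_square cos_diff algebra_simps)
  have e: "2*((b-a)/2) = b-a" by simp
  have B: "cos (b - a) = 1 - 2 * sin ((b-a)/2)^2" using cos_double_sin[of "(b-a)/2"] unfolding e .
  have C: "sin ((b-a)/2)^2 \<le> ((b-a)/2)^2" using abs_sin_x_le_abs_x[of "(b-a)/2"]
    by (metis abs_ge_zero power2_abs power_mono)
  show ?thesis unfolding A B using C by (simp add: power_divide)
qed

lemma rot_diff: fixes y :: "(real,'n::{finite,linorder}) vec"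
  assumes ne: "(idx1::'n) \<noteq> idx2"
  shows "norm (rot b y - rot a y) \<le> \<bar>b - a\<bar> * norm y"
proof -
  let ?p = "(y$idx1)^2 + (y$idx2)^2"
  have id: "\<And>p q c2 s2 c1 s1::real. (p * c2 - q * s2 - (p * c1 - q * s1))^2 + (p * s2 + q * c2 - (p * s1 + q * c1))^2
       = (p^2+q^2)*((c2-c1)^2+(s2-s1)^2)" by algebra
  have d1: "(rot b y - rot a y)$idx1 = y$idx1 * cos b - y$idx2 * sin b - (y$idx1 * cos a - y$idx2 * sin a)"
    by (simp only: vector_minus_component rot_comp(1)[OF ne])
  have d2: "(rot b y - rot a y)$idx2 = y$idx1 * sin b + y$idx2 * cos b - (y$idx1 * sin a + y$idx2 * cos a)"
    by (simp only: vector_minus_component rot_comp(2)[OF ne])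
  have d3: "(\<Sum>i\<in>UNIV-{idx1,idx2}. ((rot b y - rot a y)$i)^2) = 0"
    by (intro sum.neutral) (auto simp: rot_comp(3)[OF ne])
  have "norm (rot b y - rot a y)^2 = ?p * ((cos b - cos a)^2 + (sin b - sin a)^2)"
    unfolding nsq sum_split[OF ne, of "\<lambda>i. ((rot b y - rot a y) $ i)^2"] d1 d2 d3 id by simp
  also have "\<dots> \<le> ?p * (b-a)^2" by (intro mult_left_mono cosdiff) auto
  also have "?p \<le> norm y ^2"
    unfolding nsq sum_split[OF ne, of "\<lambda>i. (y $ i)^2"] by (simp add: sum_nonneg)
  hence "?p * (b-a)^2 \<le> norm y^2 * (b-a)^2" by (intro mult_right_mono) auto
  also have "\<dots> = (\<bar>b - a\<bar> * norm y)^2" by (simp add: power_mult_distrib)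
  finally show ?thesis by (rule power2_le_imp_le) auto
qed


lemma Lip_ok: assumes "\<exists>C. C-lipschitz_on S f" shows "(Lip S f)-lipschitz_on S f"
proof -
  let ?A = "{C. C-lipschitz_on S f}"
  have ne: "?A \<noteq> {}" using assms by auto
  have bdd: "bdd_below ?A" by (rule bdd_belowI[of _ 0]) (auto simp: lipschitz_on_def)
  show ?thesis unfolding Lip_def
  proof (rule lipschitz_onI)
    show "0 \<le> Inf ?A" using ne by (intro cInf_greatest) (auto simp: lipschitz_on_def)
    fix x y assume xy: "x \<in> S" "y \<in> S"
    show "dist (f x) (f y) \<le> Inf ?A * dist x y"
    proof (cases "dist x y = 0")
      case True
      obtain C where "C-lipschitz_on S f" using assms by auto
      hence "dist (f x) (f y) \<le> C * dist x y" using xy by (auto simp: lipschitz_on_def)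
      thus ?thesis using True by simp
    next
      case False
      hence pos: "dist x y > 0" by simp
      have "dist (f x) (f y) / dist x y \<le> Inf ?A"
      proof (rule cInf_greatest[OF ne])
        fix C assume "C \<in> ?A"
        hence "dist (f x) (f y) \<le> C * dist x y" using xy by (auto simp: lipschitz_on_def)
        thus "dist (f x) (f y) / dist x y \<le> C" using pos by (simp add: divide_le_eq)
      qed
      thus ?thesis using pos by (simp add: divide_le_eq)
    qed
  qed
qed

lemma phi_lip_aux: fixes x y :: "(real,'n::{finite,linorder}) vec"
  assumes ne: "(idx1::'n) \<noteq> idx2" and t0: "t0 > 0" and L: "L-lipschitz_on {0..} g"
    and z: "\<forall>t\<ge>t0. g t = 0" and le: "norm y \<le> norm x"
  shows "dist (rot (g (norm x)) x) (rot (g (norm y)) y) \<le> (L*t0+1) * dist x y"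
proof -
  let ?a = "g (norm x)" and ?b = "g (norm y)"
  have L0: "L \<ge> 0" using L by (simp add: lipschitz_on_def)
  have "rot ?a x - rot ?b y = (rot ?a x - rot ?a y) + (rot ?a y - rot ?b y)" by simp
  hence "norm (rot ?a x - rot ?b y) \<le> norm (rot ?a x - rot ?a y) + norm (rot ?a y - rot ?b y)"
    by (metis norm_triangle_ineq)
  also have "norm (rot ?a x - rot ?a y) = norm (x - y)" by (simp add: rot_lin rot_norm[OF ne])
  also have "norm (rot ?a y - rot ?b y) \<le> \<bar>?a - ?b\<bar> * norm y" by (rule rot_diff[OF ne])
  also have "\<bar>?a - ?b\<bar> * norm y \<le> L * t0 * norm (x - y)"
  proof (cases "norm y \<ge> t0")
    case True
    hence "?a = 0" "?b = 0" using z le by auto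
    thus ?thesis using L0 t0 by simp
  next
    case False
    have "\<bar>?a - ?b\<bar> = dist ?a ?b" by (simp add: dist_real_def)
    also have "\<dots> \<le> L * dist (norm x) (norm y)" using L by (intro lipschitz_onD) auto
    also have "dist (norm x) (norm y) \<le> norm (x - y)" unfolding dist_real_def by (rule norm_triangle_ineq3)
    hence "L * dist (norm x) (norm y) \<le> L * norm (x - y)" using L0 by (intro mult_left_mono)
    finally have "\<bar>?a - ?b\<bar> * norm y \<le> (L * norm (x - y)) * t0"
      using False by (intro mult_mono) auto
    thus ?thesis by (simp add: algebra_simps)
  qed
  finally show ?thesis by (simp add: dist_norm algebra_simps)
qed

lemma phi_lip: fixes x y :: "(real,'n::{finite,linorder}) vec"
  assumes ne: "(idx1::'n) \<noteq> idx2" and t0: "t0 > 0" and L: "L-lipschitz_on {0..} g"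
    and z: "\<forall>t\<ge>t0. g t = 0"
  shows "dist (rot (g (norm x)) x) (rot (g (norm y)) y) \<le> (L*t0+1) * dist x y"
proof (cases "norm y \<le> norm x")
  case True thus ?thesis using phi_lip_aux[OF assms] by blast
next
  case False thus ?thesis using phi_lip_aux[OF assms, of x y] by (simp add: dist_commute)
qed

theorem lemma3p2:
  fixes \<psi> :: "real \<Rightarrow> real" and t0 :: real
  assumes "CARD('n) \<ge> 2"
  shows "(\<forall>\<theta>1 \<theta>2 (y::(real,'n::{finite,linorder}) vec). norm (rot \<theta>2 y - rot \<theta>1 y) \<le> \<bar>\<theta>2 - \<theta>1\<bar> * norm y)
    \<and> ((t0 > 0 \<and> (\<exists>C. C-lipschitz_on {0..} \<psi>) \<and> (\<forall>t\<ge>t0. \<psi> t = 0)) \<longrightarrow>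
        (let \<Phi> = (\<lambda>x::(real,'n) vec. rot (\<psi> (norm x)) x) in
          bilipschitz (Lip {0..} \<psi> * t0 + 1) \<Phi> \<and> (\<forall>x. x \<notin> ball 0 t0 \<longrightarrow> \<Phi> x = x)))"
proof -
  have ne: "(idx1::'n) \<noteq> idx2" by (rule idx_ne[OF assms])
  show ?thesis
  proof (intro conjI allI impI)
    fix \<theta>1 \<theta>2 and y :: "(real,'n) vec"
    show "norm (rot \<theta>2 y - rot \<theta>1 y) \<le> \<bar>\<theta>2 - \<theta>1\<bar> * norm y" by (rule rot_diff[OF ne])
  next
    assume H: "t0 > 0 \<and> (\<exists>C. C-lipschitz_on {0..} \<psi>) \<and> (\<forall>t\<ge>t0. \<psi> t = 0)"
    hence t0: "t0 > 0" and ex: "\<exists>C. C-lipschitz_on {0..} \<psi>" and z: "\<forall>t\<ge>t0. \<psi> t = 0" by auto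
    define L where "L = Lip {0..} \<psi>"
    have L: "L-lipschitz_on {0..} \<psi>" unfolding L_def by (rule Lip_ok[OF ex])
    have L0: "L \<ge> 0" using L by (simp add: lipschitz_on_def)
    have Lm: "L-lipschitz_on {0..} (\<lambda>t. - \<psi> t)" using L
      by (simp add: lipschitz_on_def dist_real_def abs_minus_commute)

    have zm: "\<forall>t\<ge>t0. - \<psi> t = 0" using z by simp
    define \<Phi> where "\<Phi> = (\<lambda>x::(real,'n) vec. rot (\<psi> (norm x)) x)"
    define \<Psi> where "\<Psi> = (\<lambda>x::(real,'n) vec. rot (- \<psi> (norm x)) x)"
    have PP: "\<Psi> (\<Phi> x) = x" for x
      unfolding \<Phi>_def \<Psi>_def by (simp add: rot_norm[OF ne] rot_inv[OF ne])
    have inj: "inj \<Phi>" by (rule inj_on_inverseI[of _ \<Psi>]) (simp add: PP)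
    have K0: "0 \<le> L * t0 + 1" using L0 t0 by simp
    have lip1: "(L * t0 + 1)-lipschitz_on UNIV \<Phi>"
      by (rule lipschitz_onI[OF _ K0]) (unfold \<Phi>_def, rule phi_lip[OF ne t0 L z])
    have lip2: "(L * t0 + 1)-lipschitz_on (range \<Phi>) (inv \<Phi>)"
    proof (rule lipschitz_onI[OF _ K0])
      fix u v assume "u \<in> range \<Phi>" "v \<in> range \<Phi>"
      then obtain x y where u: "u = \<Phi> x" and v: "v = \<Phi> y" by auto
      have "inv \<Phi> u = \<Psi> u" "inv \<Phi> v = \<Psi> v" using inj by (simp_all add: u v PP)
      moreover have "dist (\<Psi> u) (\<Psi> v) \<le> (L * t0 + 1) * dist u v"
        unfolding \<Psi>_def by (rule phi_lip[OF ne t0 Lm zm])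
      ultimately show "dist (inv \<Phi> u) (inv \<Phi> v) \<le> (L * t0 + 1) * dist u v" by simp
    qed
    have fix0: "\<forall>x. x \<notin> ball 0 t0 \<longrightarrow> \<Phi> x = x"
      unfolding \<Phi>_def using z by (auto simp: rot0)
    show "let \<Phi> = (\<lambda>x::(real,'n) vec. rot (\<psi> (norm x)) x) in
          bilipschitz (Lip {0..} \<psi> * t0 + 1) \<Phi> \<and> (\<forall>x. x \<notin> ball 0 t0 \<longrightarrow> \<Phi> x = x)"
      unfolding Let_def \<Phi>_def[symmetric] L_def[symmetric] bilipschitz_def
      using inj lip1 lip2 fix0 by blast
  qed
qed

end
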